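(* Let $(A,B)\in M_k(\mathbb{F}_q)\times M_{k,n-k}(\mathbb{F}_q)$ and let $T\in L(W,V)$ be the linear map whose matrix with respect to $\mathcal{B}_1,\mathcal{B}_2$ is $\begin{bmatrix}A^{\mathsf T}\\ B^{\mathsf T}\end{bmatrix}\in M_{n,k}(\mathbb{F}_q)$. Then $\operatorname{rank}\mathcal{C}(A,B)=k-\dim\mathfrak{I}(T)$, i.e. the pair $(A,B)$ has a reachability subspace of dimension $k-\dim\mathfrak{I}(T)$.
   Context: Let $\mathbb{F}_q$ be the finite field with $q$ elements, $n> k$ positive integers, $V$ an $n$-dimensional $\mathbb{F}_q$-vector space and $W\subseteq V$ a $k$-dimensional subspace. Fix an ordered basis $\mathcal{B}_1=(v_1,\ldots,v_k)$ of $W$ and extend it to an ordered basis $\mathcal{B}_2=(v_1,\ldots,v_n)$ of $V$. $L(W,V)$ is the space of linear maps $W\to V$; for $T\in L(W,V)$, $\mathfrak{I}(T)$ is the largest subspace $U\subseteq W$ with $T(U)\subseteq U$. For $(A,B)\in M_k(\mathbb{F}_q)\times M_{k,n-k}(\mathbb{F}_q)$, the reachability matrix is $\mathcal{C}(A,B)=[\,B\ \ AB\ \ \cdots\ \ A^{k-1}B\,]\in M_{k,k(n-k)}(\mathbb{F}_q)$, and $(A,B)$ is said to have an $r$-dimensional reachability subspace if $\operatorname{rank}\mathcal{C}(A,B)=r$. *)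

theory Defs
  imports "Jordan_Normal_Form.DL_Rank"
begin

definition linear_on_subspace :: "('a::field \<Rightarrow> 'b::ab_group_add \<Rightarrow> 'b) \<Rightarrow> 'b set \<Rightarrow> ('b \<Rightarrow> 'b) \<Rightarrow> bool" where
  "linear_on_subspace scale W T \<longleftrightarrow>
     (\<forall>x\<in>W. \<forall>y\<in>W. T (x + y) = T x + T y) \<and> (\<forall>c. \<forall>x\<in>W. T (scale c x) = scale c (T x))"

definition largest_invariant_subspace :: "('a::field \<Rightarrow> 'b::ab_group_add \<Rightarrow> 'b) \<Rightarrow> 'b set \<Rightarrow> ('b \<Rightarrow> 'b) \<Rightarrow> 'b set" where
  "largest_invariant_subspace scale W T =
     (THE U. module.subspace scale U \<and> U \<subseteq> W \<and> T ` U \<subseteq> U \<and>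
        (\<forall>U'. module.subspace scale U' \<and> U' \<subseteq> W \<and> T ` U' \<subseteq> U' \<longrightarrow> U' \<subseteq> U))"

text \<open>Reachability matrix C(A,B) = [B, AB, ..., A^(k-1) B] for A k x k and B k x m:
  column j*m + l (j < k, l < m) is column l of A^j B.\<close>
definition reach_mat :: "'a::field mat \<Rightarrow> 'a mat \<Rightarrow> 'a mat" where
  "reach_mat A B = (let k = dim_row A; m = dim_col B in
     mat k (k * m) (\<lambda>(i, j). ((A ^\<^sub>m (j div m)) * B) $$ (i, j mod m)))"

end

theory Submission
  imports Defs "Jordan_Normal_Form.Matrix_Kernel"
begin


lemma (in vec_space) colspace_image:
  assumes M: "M \<in> carrier_mat n p"
  shows "span (set (cols M)) = {M *\<^sub>v x | x. x \<in> carrier_vec p}"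
proof -
  have sub: "set (cols M) \<subseteq> carrier_vec n" using M cols_dim by blast
  have "span (set (cols M)) = span_list (cols M)" using span_list_as_span[OF sub] by simp
  also have "\<dots> = {lincomb_list c (cols M) | c. True}" unfolding span_list_def by auto
  also have "\<dots> = {M *\<^sub>v x | x. x \<in> carrier_vec p}"
  proof -
    have dw: "\<forall>w\<in>set (cols M). dim_vec w = n" using sub by auto
    have eq: "lincomb_list c (cols M) = M *\<^sub>v vec p c" for c
      using lincomb_list_as_mat_mult[OF dw, of c] M mat_of_cols_cols[of M] by (simp add: carrier_matD)
    show ?thesis
    proof (intro equalityI subsetI)
      fix y assume "y \<in> {lincomb_list c (cols M) | c. True}"
      then obtain c where "y = lincomb_list c (cols M)" by auto
      then show "y \<in> {M *\<^sub>v x | x. x \<in> carrier_vec p}" using eq by auto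
    next
      fix y assume "y \<in> {M *\<^sub>v x | x. x \<in> carrier_vec p}"
      then obtain x where x: "x \<in> carrier_vec p" "y = M *\<^sub>v x" by auto
      have "vec p (\<lambda>i. x $ i) = x" using x by auto
      then have "y = lincomb_list (\<lambda>i. x $ i) (cols M)" using eq x by metis
      then show "y \<in> {lincomb_list c (cols M) | c. True}" by auto
    qed
  qed
  finally show ?thesis .
qed

lemma rank_nullity_mat:
  fixes M :: "'a::field mat"
  assumes M: "M \<in> carrier_mat m p"
  shows "kernel_dim M + vec_space.rank m M = p"
proof -
  interpret VP: vec_space "TYPE('a)" p .
  interpret VM: vec_space "TYPE('a)" m .
  interpret L: linear_map class_ring "module_vec TYPE('a) p" "module_vec TYPE('a) m" "\<lambda>x. M *\<^sub>v x"
  proof (unfold_locales)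
    show "(\<lambda>x. M *\<^sub>v x) \<in> LinearCombinations.module_hom class_ring (module_vec TYPE('a) p) (module_vec TYPE('a) m)"
      unfolding LinearCombinations.module_hom_def using M
      by (auto simp: module_vec_simps class_ring_simps mult_add_distrib_mat_vec mult_mat_vec)
  qed
  interpret K: kernel m p M by (unfold_locales, rule M)
  have ker: "L.kerT = mat_kernel M"
    unfolding mod_hom.ker_def[OF L.mod_hom_axioms] mat_kernel_def using M by auto
  have im: "L.imT = VM.span (set (cols M))"
    unfolding mod_hom.im_def[OF L.mod_hom_axioms] VM.colspace_image[OF M] by auto
  have "vectorspace.dim class_ring (VM.vs L.imT) + vectorspace.dim class_ring (VP.vs L.kerT) = VP.dim"
    by (rule L.rank_nullity) simp
  then show ?thesis unfolding ker im VP.dim_is_n VM.rank_def K.kernel_dim[symmetric]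
    by simp
qed

lemma (in vec_space) dim_span_mono:
  assumes S1: "S1 \<subseteq> carrier_vec n" and S2: "S2 \<subseteq> carrier_vec n"
    and f1: "finite S1" and f2: "finite S2" and sub: "span S1 \<subseteq> span S2"
  shows "vectorspace.dim class_ring (vs (span S1)) \<le> vectorspace.dim class_ring (vs (span S2))"
proof -
  have ss1: "subspace class_ring (span S1) V" using span_is_subspace S1 by simp
  have ss2: "subspace class_ring (span S2) V" using span_is_subspace S2 by simp
  have vs2: "vectorspace class_ring (vs (span S2))" using subspace_is_vs[OF ss2] .
  have sub12: "subspace class_ring (span S1) (vs (span S2))"
    using nested_subspaces[OF ss2 ss1 sub] .
  have fd1: "vectorspace.fin_dim class_ring ((vs (span S2))\<lparr>carrier := span S1\<rparr>)"
    using fin_dim_span[OF f1] S1 by simp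
  show ?thesis
    using vectorspace.subspace_dim[OF vs2 sub12 fin_dim_span[OF f2] fd1] S2 by simp
qed

lemma rank_transpose_le:
  fixes M :: "'a::field mat"
  assumes M: "M \<in> carrier_mat m p"
  shows "vec_space.rank p (transpose_mat M) \<le> vec_space.rank m M"
proof -
  interpret VP: vec_space "TYPE('a)" p .
  interpret VM: vec_space "TYPE('a)" m .
  define R where "R = VM.span (set (cols M))"
  have colsM: "set (cols M) \<subseteq> carrier_vec m" using M cols_dim by blast
  have ssR: "subspace class_ring R VM.V" unfolding R_def using VM.span_is_subspace colsM by simp
  have vsR: "vectorspace class_ring (VM.vs R)" using VM.subspace_is_vs[OF ssR] .
  obtain Bs where fB: "finite Bs" and bB: "vectorspace.basis class_ring (VM.vs R) Bs"
    using vectorspace.finite_basis_exists[OF vsR] VM.fin_dim_span_cols[OF M] unfolding R_def by blast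
  have rk: "VM.rank M = card Bs"
    unfolding VM.rank_def using vectorspace.dim_basis[OF vsR fB bB] unfolding R_def by simp
  have BR: "Bs \<subseteq> R" and genB: "LinearCombinations.module.span class_ring (VM.vs R) Bs = R"
    using bB unfolding vectorspace.basis_def[OF vsR] by auto
  have subR: "submodule class_ring R VM.V" using ssR unfolding subspace_def by auto
  have spanB: "VM.span Bs = R"
    using VM.span_li_not_depend(1)[OF BR subR] genB by simp
  have Rc: "R \<subseteq> carrier_vec m" unfolding R_def using VM.span_is_subset2[OF colsM] by simp
  obtain bs where sbs: "set bs = Bs" and dbs: "distinct bs" using finite_distinct_list[OF fB] by blast
  define r where "r = length bs"
  have rB: "r = card Bs" unfolding r_def using sbs dbs distinct_card by metis
  have bsc: "set bs \<subseteq> carrier_vec m" using sbs BR Rc by auto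
  define P where "P = mat_of_cols m bs"
  have P: "P \<in> carrier_mat m r" unfolding P_def r_def by simp
  have colsP: "cols P = bs" unfolding P_def using cols_mat_of_cols[OF bsc] .
  have "\<forall>j<p. \<exists>q. q \<in> carrier_vec r \<and> P *\<^sub>v q = col M j"
  proof (intro allI impI)
    fix j assume j: "j < p"
    have "col M j \<in> set (cols M)" using j M by (simp add: cols_def)
    then have "col M j \<in> VM.span (set (cols P))" using VM.in_own_span[OF colsM] spanB sbs colsP
      unfolding R_def by auto
    then show "\<exists>q. q \<in> carrier_vec r \<and> P *\<^sub>v q = col M j"
      unfolding VM.colspace_image[OF P] by auto
  qed
  then obtain qf where qf: "\<And>j. j < p \<Longrightarrow> qf j \<in> carrier_vec r \<and> P *\<^sub>v qf j = col M j" by metis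
  define Q where "Q = mat r p (\<lambda>(i,j). qf j $ i)"
  have Q: "Q \<in> carrier_mat r p" unfolding Q_def by simp
  have colQ: "col Q j = qf j" if "j < p" for j
    using qf[OF that] that unfolding Q_def by (intro eq_vecI, auto)
  have MPQ: "M = P * Q"
  proof (rule eq_matI)
    fix i j assume i: "i < dim_row (P * Q)" and j: "j < dim_col (P * Q)"
    then have i': "i < m" and j': "j < p" using P Q by auto
    have "(P * Q) $$ (i,j) = row P i \<bullet> qf j" using i j colQ[OF j'] by simp
    also have "\<dots> = (P *\<^sub>v qf j) $ i" using i' P by simp
    also have "\<dots> = M $$ (i,j)" using qf[OF j'] i' j' M by simp
    finally show "M $$ (i,j) = (P * Q) $$ (i,j)" by simp
  qed (use M P Q in auto)
  have MT: "transpose_mat M = transpose_mat Q * transpose_mat P"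
    unfolding MPQ using transpose_mult[OF P Q] .
  have QT: "transpose_mat Q \<in> carrier_mat p r" using Q by simp
  have PT: "transpose_mat P \<in> carrier_mat r m" using P by simp
  have colsMT: "set (cols (transpose_mat M)) \<subseteq> carrier_vec p" using cols_dim[of "transpose_mat M"] M by simp
  have colsQT: "set (cols (transpose_mat Q)) \<subseteq> carrier_vec p" using QT cols_dim by blast
  have "set (cols (transpose_mat M)) \<subseteq> VP.span (set (cols (transpose_mat Q)))"
  proof
    fix c assume "c \<in> set (cols (transpose_mat M))"
    then obtain i where i: "i < m" and c: "c = col (transpose_mat M) i" using M
      by (auto simp: cols_def)
    have "c = transpose_mat Q *\<^sub>v col (transpose_mat P) i"
      unfolding c MT using col_mult2[OF QT PT] i by simp
    moreover have "col (transpose_mat P) i \<in> carrier_vec r" using PT i by simp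
    ultimately show "c \<in> VP.span (set (cols (transpose_mat Q)))"
      unfolding VP.colspace_image[OF QT] by auto
  qed
  then have "VP.span (set (cols (transpose_mat M))) \<subseteq> VP.span (set (cols (transpose_mat Q)))"
    using VP.span_subsetI[OF colsQT] by simp
  then have "VP.rank (transpose_mat M) \<le> VP.rank (transpose_mat Q)"
    unfolding VP.rank_def using VP.dim_span_mono[OF colsMT colsQT] by simp
  also have "\<dots> \<le> r" using VP.rank_le_nc[OF QT] .
  finally show ?thesis using rk rB by simp
qed

lemma rank_transpose:
  fixes M :: "'a::field mat"
  assumes M: "M \<in> carrier_mat m p"
  shows "vec_space.rank p (transpose_mat M) = vec_space.rank m M"
  using rank_transpose_le[OF M] rank_transpose_le[of "transpose_mat M" p m] M by fastforce


lemma sum_split_nat: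
  fixes k d :: nat and g :: "nat \<Rightarrow> 'c::comm_monoid_add"
  shows "(\<Sum>i<k+d. g i) = (\<Sum>i<k. g i) + (\<Sum>i<d. g (k+i))"
  by (induct d) (auto simp: add.assoc)

locale cs = VS: vector_space scale
  for scale :: "'a::field \<Rightarrow> 'b::ab_group_add \<Rightarrow> 'b" +
  fixes n k :: nat and v :: "nat \<Rightarrow> 'b" and A B :: "'a mat" and T :: "'b \<Rightarrow> 'b"
  assumes kn: "k < n" and basis_inj: "inj_on v {..<n}"
   and basis_indep: "\<not> VS.dependent (v ` {..<n})"
   and basis_span: "VS.span (v ` {..<n}) = UNIV"
   and A_dim: "A \<in> carrier_mat k k" and B_dim: "B \<in> carrier_mat k (n - k)"
   and T_lin: "linear_on_subspace scale (VS.span (v ` {..<k})) T"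
   and T_mat: "\<forall>j<k. T (v j) = (\<Sum>i<k. scale (A $$ (j, i)) (v i)) + (\<Sum>i<n - k. scale (B $$ (j, i)) (v (k + i)))"
begin

abbreviation W where "W \<equiv> VS.span (v ` {..<k})"
definition cc :: "'a vec \<Rightarrow> 'b" where "cc x = (\<Sum>j<k. scale (x $ j) (v j))"
definition dd :: "'a vec \<Rightarrow> 'b" where "dd y = (\<Sum>i<n-k. scale (y $ i) (v (k+i)))"

lemma indep_split:
  assumes "(\<Sum>i<k. scale (a i) (v i)) + (\<Sum>i<n-k. scale (b i) (v (k+i))) = 0"
  shows "(\<forall>i<k. a i = 0) \<and> (\<forall>i<n-k. b i = 0)"
proof -
  define f where "f i = (if i < k then a i else b (i - k))" for i
  have nk: "n = k + (n - k)" using kn by simp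
  have "(\<Sum>i<n. scale (f i) (v i)) = (\<Sum>i<k. scale (f i) (v i)) + (\<Sum>i<n-k. scale (f (k+i)) (v (k+i)))"
    using sum_split_nat[of "\<lambda>i. scale (f i) (v i)" k "n-k"] nk by simp
  also have "\<dots> = 0" using assms unfolding f_def by simp
  finally have s0: "(\<Sum>i<n. scale (f i) (v i)) = 0" .
  have ind: "VS.independent (v ` {..<n})" using basis_indep .
  define c where "c w = f (inv_into {..<n} v w)" for w
  have "(\<Sum>w\<in>v ` {..<n}. scale (c w) w) = (\<Sum>i<n. scale (c (v i)) (v i))"
    using sum.reindex[OF basis_inj] by simp
  also have "\<dots> = (\<Sum>i<n. scale (f i) (v i))"
    unfolding c_def using inv_into_f_f[OF basis_inj] by simp
  finally have "(\<Sum>w\<in>v ` {..<n}. scale (c w) w) = 0" using s0 by simp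
  then have "\<forall>w\<in>v ` {..<n}. c w = 0" using ind VS.dependent_finite[of "v ` {..<n}"] by blast
  then have f0: "\<And>i. i < n \<Longrightarrow> f i = 0"
    unfolding c_def using inv_into_f_f[OF basis_inj] by force
  show ?thesis
  proof (intro conjI allI impI)
    fix i assume "i < k" then show "a i = 0" using f0[of i] kn unfolding f_def by simp
  next
    fix i assume "i < n - k" then show "b i = 0" using f0[of "k+i"] unfolding f_def by simp
  qed
qed

lemma inj_k: "inj_on v {..<k}" using kn by (intro inj_on_subset[OF basis_inj]) auto

lemma W_elem: assumes "w \<in> W" shows "\<exists>x \<in> carrier_vec k. w = cc x"
proof -
  obtain u where u: "w = (\<Sum>y\<in>v ` {..<k}. scale (u y) y)"
    using assms VS.span_finite[of "v ` {..<k}"] by auto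
  also have "\<dots> = (\<Sum>i<k. scale (u (v i)) (v i))" using sum.reindex[OF inj_k] by simp
  also have "\<dots> = cc (vec k (\<lambda>i. u (v i)))" unfolding cc_def by (intro sum.cong) auto
  finally show ?thesis by auto
qed

lemma cc_W: "cc x \<in> W"
  unfolding cc_def by (intro VS.span_sum VS.span_scale VS.span_base) auto

lemma cc_diff: "cc x - cc y = (\<Sum>j<k. scale (x $ j - y $ j) (v j))"
  unfolding cc_def by (simp add: sum_subtractf VS.scale_left_diff_distrib)

lemma cc_inj: assumes "x \<in> carrier_vec k" "y \<in> carrier_vec k" "cc x = cc y" shows "x = y"
proof -
  have "(\<Sum>j<k. scale (x $ j - y $ j) (v j)) + (\<Sum>i<n-k. scale 0 (v (k+i))) = 0"
    using cc_diff[of x y] assms(3) by simp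
  then have "\<forall>i<k. x $ i - y $ i = 0" using indep_split[of "\<lambda>j. x $ j - y $ j" "\<lambda>_. 0"] by blast
  then show ?thesis using assms by (intro eq_vecI) auto
qed

lemma cc_zero: "cc (0\<^sub>v k) = 0" unfolding cc_def by simp
lemma dd_zero: "dd (0\<^sub>v (n-k)) = 0" unfolding dd_def by simp

lemma ccdd_W: assumes y: "y \<in> carrier_vec (n-k)" and w: "cc x + dd y \<in> W"
  shows "y = 0\<^sub>v (n-k)"
proof -
  obtain x' where "cc x + dd y = cc x'" using W_elem[OF w] by auto
  then have "(cc x - cc x') + dd y = 0" by (simp add: algebra_simps)
  then have "(\<Sum>j<k. scale (x $ j - x' $ j) (v j)) + (\<Sum>i<n-k. scale (y $ i) (v (k+i))) = 0"
    unfolding cc_diff dd_def .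
  then have "\<forall>i<n-k. y $ i = 0" using indep_split[of "\<lambda>j. x $ j - x' $ j" "\<lambda>i. y $ i"] by blast
  then show ?thesis using y by (intro eq_vecI) auto
qed

lemma T_add: "w1 \<in> W \<Longrightarrow> w2 \<in> W \<Longrightarrow> T (w1 + w2) = T w1 + T w2"
  using T_lin unfolding linear_on_subspace_def by blast
lemma T_scale: "w \<in> W \<Longrightarrow> T (scale c w) = scale c (T w)"
  using T_lin unfolding linear_on_subspace_def by blast
lemma T_zero: "T 0 = 0"
proof -
  have "T (0 + 0) = T 0 + T 0" using T_add[of 0 0] VS.span_zero by blast
  then show ?thesis by simp
qed

lemma T_sum: "finite J \<Longrightarrow> (\<And>j. j \<in> J \<Longrightarrow> f j \<in> W) \<Longrightarrow> T (sum f J) = (\<Sum>j\<in>J. T (f j))"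
proof (induct J rule: finite_induct)
  case empty then show ?case using T_zero by simp
next
  case (insert a J)
  have "sum f J \<in> W" using insert by (intro VS.span_sum) auto
  then show ?case using insert T_add[of "f a" "sum f J"] by simp
qed

lemma T_cc: assumes x: "x \<in> carrier_vec k"
  shows "T (cc x) = cc (transpose_mat A *\<^sub>v x) + dd (transpose_mat B *\<^sub>v x)"
proof -
  have "T (cc x) = (\<Sum>j<k. T (scale (x $ j) (v j)))"
    unfolding cc_def by (rule T_sum) (auto intro: VS.span_scale VS.span_base)
  also have "\<dots> = (\<Sum>j<k. scale (x $ j) (T (v j)))"
    by (intro sum.cong refl T_scale VS.span_base) auto
  also have "\<dots> = (\<Sum>j<k. scale (x $ j) ((\<Sum>i<k. scale (A $$ (j, i)) (v i)) + (\<Sum>i<n - k. scale (B $$ (j, i)) (v (k + i)))))"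
    using T_mat by simp
  also have "\<dots> = (\<Sum>j<k. \<Sum>i<k. scale (x $ j * A $$ (j, i)) (v i)) + (\<Sum>j<k. \<Sum>i<n - k. scale (x $ j * B $$ (j, i)) (v (k + i)))"
    by (simp add: VS.scale_right_distrib VS.scale_sum_right sum.distrib)
  also have "\<dots> = (\<Sum>i<k. scale (\<Sum>j<k. x $ j * A $$ (j, i)) (v i)) + (\<Sum>i<n - k. scale (\<Sum>j<k. x $ j * B $$ (j, i)) (v (k + i)))"
    by (subst (1 2) sum.swap) (simp add: VS.scale_sum_left)
  also have "\<dots> = cc (transpose_mat A *\<^sub>v x) + dd (transpose_mat B *\<^sub>v x)"
  proof -
    have a: "(transpose_mat A *\<^sub>v x) $ i = (\<Sum>j<k. x $ j * A $$ (j, i))" if "i < k" for i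
      using that x A_dim by (auto simp: scalar_prod_def atLeast0LessThan mult.commute intro!: sum.cong)
    have b: "(transpose_mat B *\<^sub>v x) $ i = (\<Sum>j<k. x $ j * B $$ (j, i))" if "i < n - k" for i
      using that x B_dim by (auto simp: scalar_prod_def atLeast0LessThan mult.commute intro!: sum.cong)
    show ?thesis unfolding cc_def dd_def using a b by simp
  qed
  finally show ?thesis .
qed

definition P where "P m = {w. \<forall>j\<le>m. (T ^^ j) w \<in> W}"

lemma all_le_Suc: "(\<forall>j\<le>Suc m. Q j) \<longleftrightarrow> Q 0 \<and> (\<forall>j\<le>m. Q (Suc j))"
proof
  assume "\<forall>j\<le>Suc m. Q j" then show "Q 0 \<and> (\<forall>j\<le>m. Q (Suc j))" by auto
next
  assume a: "Q 0 \<and> (\<forall>j\<le>m. Q (Suc j))"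
  show "\<forall>j\<le>Suc m. Q j"
  proof (intro allI impI)
    fix j assume "j \<le> Suc m"
    then show "Q j" using a by (cases j) auto
  qed
qed

lemma P_0: "P 0 = W" unfolding P_def by simp
lemma P_Suc: "P (Suc m) = {w \<in> W. T w \<in> P m}"
  unfolding P_def all_le_Suc by (simp add: funpow_Suc_right del: funpow.simps)
lemma P_W: "P m \<subseteq> W" unfolding P_def by force
lemma P_mono: "P (Suc m) \<subseteq> P m" unfolding P_def by auto

lemma P_subspace: "VS.subspace (P m)"
proof (induct m)
  case 0 then show ?case using P_0 by simp
next
  case (Suc m)
  show ?case unfolding P_Suc VS.subspace_def
  proof (intro conjI ballI allI)
    show "0 \<in> {w \<in> W. T w \<in> P m}" using T_zero Suc VS.span_zero unfolding VS.subspace_def by auto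
  next
    fix x y assume x: "x \<in> {w \<in> W. T w \<in> P m}" and y: "y \<in> {w \<in> W. T w \<in> P m}"
    then show "x + y \<in> {w \<in> W. T w \<in> P m}" using T_add Suc VS.span_add unfolding VS.subspace_def by auto
  next
    fix c x assume x: "x \<in> {w \<in> W. T w \<in> P m}"
    then show "scale c x \<in> {w \<in> W. T w \<in> P m}" using T_scale Suc VS.span_scale unfolding VS.subspace_def by auto
  qed
qed

lemma P_stable: assumes st: "P m = P (Suc m)" shows "P (m + d) = P m"
proof (induct d)
  case 0 then show ?case by simp
next
  case (Suc d)
  have "P (m + Suc d) = {w \<in> W. T w \<in> P (m + d)}" using P_Suc[of "m+d"] by simp
  also have "\<dots> = P (Suc m)" using Suc P_Suc[of m] by simp
  finally show ?case using st by simp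
qed

lemma dim_W: "VS.dim W = k"
proof -
  have "VS.independent (v ` {..<k})"
    using VS.independent_mono[OF basis_indep, of "v ` {..<k}"] kn by (meson basis_indep image_mono lessThan_subset_iff less_imp_le_nat)
  then have "VS.dim W = card (v ` {..<k})" by (rule VS.dim_span_eq_card_independent)
  also have "\<dots> = k" using card_image[OF inj_k] by simp
  finally show ?thesis .
qed

lemma P_k: "P (Suc k) = P k"
proof (rule ccontr)
  assume ne: "P (Suc k) \<noteq> P k"
  interpret FD: finite_dimensional_vector_space scale "v ` {..<n}"
    by unfold_locales (use basis_indep basis_span in auto)
  have ne_all: "P (Suc m) \<noteq> P m" if "m \<le> k" for m
  proof
    assume eq: "P (Suc m) = P m"
    have "P (m + (k - m)) = P m" using P_stable[OF eq[symmetric]] .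
    moreover have "P (m + (Suc k - m)) = P m" using P_stable[OF eq[symmetric]] .
    ultimately show False using ne that by (simp add: Suc_diff_le)
  qed
  have "VS.dim (P m) + m \<le> k" if "m \<le> Suc k" for m
    using that
  proof (induct m)
    case 0 then show ?case using P_0 dim_W by simp
  next
    case (Suc m)
    then have mk: "m \<le> k" by simp
    have "P (Suc m) \<subset> P m" using P_mono ne_all[OF mk] by blast
    then have "VS.span (P (Suc m)) \<subset> VS.span (P m)"
      using P_subspace[of m] P_subspace[of "Suc m"] by (simp add: VS.span_eq_iff[THEN iffD2])
    then have "VS.dim (P (Suc m)) < VS.dim (P m)" by (rule FD.dim_psubset)
    then show ?case using Suc mk by simp
  qed
  from this[of "Suc k"] show False by simp
qed

lemma P_ge: assumes "k \<le> m" shows "P m = P k"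
  using P_stable[of k "m - k"] P_k assms by simp

lemma inv_sub: assumes "VS.subspace U" "U \<subseteq> W" "T ` U \<subseteq> U" shows "U \<subseteq> P m"
proof (induct m)
  case 0 then show ?case using assms P_0 by simp
next
  case (Suc m) then show ?case using assms unfolding P_Suc by auto
qed

lemma P_inv: "T ` P k \<subseteq> P k"
proof
  fix y assume "y \<in> T ` P k"
  then obtain w where w: "w \<in> P k" "y = T w" by auto
  then have "w \<in> P (Suc k)" using P_k by simp
  then show "y \<in> P k" using w unfolding P_Suc by simp
qed

lemma largest: "largest_invariant_subspace scale W T = P k"
  unfolding largest_invariant_subspace_def
proof (rule the_equality)
  have max: "\<forall>U'. VS.subspace U' \<and> U' \<subseteq> W \<and> T ` U' \<subseteq> U' \<longrightarrow> U' \<subseteq> P k"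
  proof (intro allI impI)
    fix U' assume h: "VS.subspace U' \<and> U' \<subseteq> W \<and> T ` U' \<subseteq> U'"
    then have h1: "VS.subspace U'" and h2: "U' \<subseteq> W" and h3: "T ` U' \<subseteq> U'" by simp_all
    show "U' \<subseteq> P k" by (rule inv_sub[OF h1 h2 h3])
  qed
  show "VS.subspace (P k) \<and> P k \<subseteq> W \<and> T ` P k \<subseteq> P k \<and>
    (\<forall>U'. VS.subspace U' \<and> U' \<subseteq> W \<and> T ` U' \<subseteq> U' \<longrightarrow> U' \<subseteq> P k)"
    using P_subspace[of k] P_W[of k] P_inv max by simp
next
  fix U assume U: "VS.subspace U \<and> U \<subseteq> W \<and> T ` U \<subseteq> U \<and>
    (\<forall>U'. VS.subspace U' \<and> U' \<subseteq> W \<and> T ` U' \<subseteq> U' \<longrightarrow> U' \<subseteq> U)"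
  then have h1: "VS.subspace U" and h2: "U \<subseteq> W" and h3: "T ` U \<subseteq> U"
    and h4: "\<forall>U'. VS.subspace U' \<and> U' \<subseteq> W \<and> T ` U' \<subseteq> U' \<longrightarrow> U' \<subseteq> U" by simp_all
  have "U \<subseteq> P k" by (rule inv_sub[OF h1 h2 h3])
  moreover have "P k \<subseteq> U" using h4[rule_format, of "P k"] P_subspace[of k] P_W[of k] P_inv by simp
  ultimately show "U = P k" by (rule antisym)
qed

definition itA where "itA j x = ((\<lambda>y. transpose_mat A *\<^sub>v y) ^^ j) x"

lemma itA_carrier: "x \<in> carrier_vec k \<Longrightarrow> itA j x \<in> carrier_vec k"
  unfolding itA_def by (induct j) (use A_dim in auto)
lemma itA_0: "itA 0 x = x" unfolding itA_def funpow.simps(1) by (simp only: id_apply)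
lemma itA_Suc: "itA j (transpose_mat A *\<^sub>v x) = itA (Suc j) x"
  unfolding itA_def funpow_Suc_right by (simp only: o_apply)
lemma itA_Suc2: "itA (Suc j) x = transpose_mat A *\<^sub>v itA j x"
  unfolding itA_def funpow.simps(2) by (simp only: o_apply)

lemma all_less_Suc: "(\<forall>j<Suc m. Q j) \<longleftrightarrow> Q 0 \<and> (\<forall>j<m. Q (Suc j))"
  by (auto simp: less_Suc_eq_0_disj)

lemma P_coord: "x \<in> carrier_vec k \<Longrightarrow> cc x \<in> P m \<longleftrightarrow> (\<forall>j<m. transpose_mat B *\<^sub>v itA j x = 0\<^sub>v (n-k))"
proof (induct m arbitrary: x)
  case 0 then show ?case using P_0 cc_W by simp
next
  case (Suc m)
  have AT: "transpose_mat A *\<^sub>v x \<in> carrier_vec k"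
    using mult_mat_vec_carrier[of "transpose_mat A" k k x] A_dim Suc.prems by simp
  have BT: "transpose_mat B *\<^sub>v x \<in> carrier_vec (n-k)"
    using mult_mat_vec_carrier[of "transpose_mat B" "n-k" k x] B_dim Suc.prems by simp
  show ?case
  proof (cases "transpose_mat B *\<^sub>v x = 0\<^sub>v (n-k)")
    case True
    have Tc: "T (cc x) = cc (transpose_mat A *\<^sub>v x)" using T_cc[OF Suc.prems] True dd_zero by simp
    have "cc x \<in> P (Suc m) \<longleftrightarrow> cc (transpose_mat A *\<^sub>v x) \<in> P m"
      unfolding P_Suc using cc_W Tc by simp
    also have "\<dots> \<longleftrightarrow> (\<forall>j<m. transpose_mat B *\<^sub>v itA (Suc j) x = 0\<^sub>v (n-k))"
      using Suc.hyps[OF AT] itA_Suc by simp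
    also have "\<dots> \<longleftrightarrow> (\<forall>j<Suc m. transpose_mat B *\<^sub>v itA j x = 0\<^sub>v (n-k))"
      unfolding all_less_Suc using True itA_0 by simp
    finally show ?thesis .
  next
    case False
    have "cc x \<notin> P (Suc m)"
    proof
      assume "cc x \<in> P (Suc m)"
      then have "T (cc x) \<in> W" unfolding P_Suc using P_W by auto
      then show False using ccdd_W[OF BT] T_cc[OF Suc.prems] False by auto
    qed
    moreover have "\<not> (\<forall>j<Suc m. transpose_mat B *\<^sub>v itA j x = 0\<^sub>v (n-k))"
      using False itA_0 by auto
    ultimately show ?thesis by blast
  qed
qed

lemma Pk_image: "P k = cc ` {x \<in> carrier_vec k. \<forall>j<k. transpose_mat B *\<^sub>v itA j x = 0\<^sub>v (n-k)}"
proof (intro equalityI subsetI)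
  fix w assume w: "w \<in> P k"
  then obtain x where x: "x \<in> carrier_vec k" "w = cc x" using W_elem P_W by blast
  then show "w \<in> cc ` {x \<in> carrier_vec k. \<forall>j<k. transpose_mat B *\<^sub>v itA j x = 0\<^sub>v (n-k)}"
    using P_coord[OF x(1)] w by auto
next
  fix w assume "w \<in> cc ` {x \<in> carrier_vec k. \<forall>j<k. transpose_mat B *\<^sub>v itA j x = 0\<^sub>v (n-k)}"
  then show "w \<in> P k" using P_coord by auto
qed

lemma Apow_carrier: "A ^\<^sub>m j \<in> carrier_mat k k"
  using pow_mat_dim_square[OF A_dim] by (intro carrier_matI) auto

lemma pow_dot: "u \<in> carrier_vec k \<Longrightarrow> x \<in> carrier_vec k \<Longrightarrow> (A ^\<^sub>m j *\<^sub>v u) \<bullet> x = u \<bullet> itA j x"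
proof (induct j arbitrary: u)
  case 0 then show ?case using A_dim itA_0 by simp
next
  case (Suc j)
  have Au: "A *\<^sub>v u \<in> carrier_vec k" using mult_mat_vec_carrier[OF A_dim] Suc.prems by simp
  have "(A ^\<^sub>m Suc j *\<^sub>v u) = A ^\<^sub>m j *\<^sub>v (A *\<^sub>v u)"
    using assoc_mult_mat_vec[OF Apow_carrier[of j] A_dim Suc.prems(1)] by simp
  then have "(A ^\<^sub>m Suc j *\<^sub>v u) \<bullet> x = (A *\<^sub>v u) \<bullet> itA j x" using Suc.hyps[OF Au Suc.prems(2)] by simp
  also have "\<dots> = itA j x \<bullet> (A *\<^sub>v u)" using comm_scalar_prod[OF Au itA_carrier[OF Suc.prems(2)]] .
  also have "\<dots> = (transpose_mat A *\<^sub>v itA j x) \<bullet> u"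
    using transpose_vec_mult_scalar[OF A_dim Suc.prems(1) itA_carrier[OF Suc.prems(2)]] by simp
  also have "\<dots> = u \<bullet> itA (Suc j) x"
  proof -
    have ATc: "transpose_mat A \<in> carrier_mat k k" using A_dim by simp
    show ?thesis unfolding itA_Suc2
      by (rule comm_scalar_prod[OF mult_mat_vec_carrier[OF ATc itA_carrier[OF Suc.prems(2)]] Suc.prems(1)])
  qed
  finally show ?case .
qed

lemma C_carrier: "reach_mat A B \<in> carrier_mat k (k * (n - k))"
  unfolding reach_mat_def Let_def using A_dim B_dim by auto

lemma C_col: assumes jj: "jj < k * (n - k)"
  shows "col (reach_mat A B) jj = A ^\<^sub>m (jj div (n - k)) *\<^sub>v col B (jj mod (n - k))"
proof -
  have m0: "0 < n - k" using kn by simp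
  have l: "jj mod (n - k) < n - k" using m0 by simp
  have Bc: "col B (jj mod (n - k)) \<in> carrier_vec k" using B_dim l by simp
  show ?thesis
  proof (rule eq_vecI)
    show "dim_vec (col (reach_mat A B) jj) = dim_vec (A ^\<^sub>m (jj div (n - k)) *\<^sub>v col B (jj mod (n - k)))"
      using C_carrier Apow_carrier[of "jj div (n-k)"] A_dim by simp
  next
    fix i assume "i < dim_vec (A ^\<^sub>m (jj div (n - k)) *\<^sub>v col B (jj mod (n - k)))"
    then have i: "i < k" using Apow_carrier[of "jj div (n-k)"] A_dim by simp
    have "col (reach_mat A B) jj $ i = reach_mat A B $$ (i, jj)" using i jj C_carrier by simp
    also have "\<dots> = (A ^\<^sub>m (jj div (n - k)) * B) $$ (i, jj mod (n - k))"
      unfolding reach_mat_def Let_def using A_dim B_dim i jj by simp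
    also have "\<dots> = row (A ^\<^sub>m (jj div (n - k))) i \<bullet> col B (jj mod (n - k))"
      by (rule index_mult_mat(1)) (use i l A_dim B_dim in auto)
    also have "\<dots> = (A ^\<^sub>m (jj div (n - k)) *\<^sub>v col B (jj mod (n - k))) $ i"
      by (rule index_mult_mat_vec[symmetric]) (use i A_dim in simp)
    finally show "col (reach_mat A B) jj $ i = (A ^\<^sub>m (jj div (n - k)) *\<^sub>v col B (jj mod (n - k))) $ i" .
  qed
qed

lemma BT_entry: "l < n - k \<Longrightarrow> (transpose_mat B *\<^sub>v y) $ l = col B l \<bullet> y"
  using B_dim by simp

lemma CT_entry: assumes jj: "jj < k * (n - k)" and x: "x \<in> carrier_vec k"
  shows "(transpose_mat (reach_mat A B) *\<^sub>v x) $ jj =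
    (transpose_mat B *\<^sub>v itA (jj div (n - k)) x) $ (jj mod (n - k))"
proof -
  have m0: "0 < n - k" using kn by simp
  have l: "jj mod (n - k) < n - k" using m0 by simp
  have Bc: "col B (jj mod (n - k)) \<in> carrier_vec k" using B_dim l by simp
  have "(transpose_mat (reach_mat A B) *\<^sub>v x) $ jj = col (reach_mat A B) jj \<bullet> x"
    using jj C_carrier by simp
  also have "\<dots> = (A ^\<^sub>m (jj div (n - k)) *\<^sub>v col B (jj mod (n - k))) \<bullet> x" using C_col[OF jj] by simp
  also have "\<dots> = col B (jj mod (n - k)) \<bullet> itA (jj div (n - k)) x" using pow_dot[OF Bc x] .
  also have "\<dots> = (transpose_mat B *\<^sub>v itA (jj div (n - k)) x) $ (jj mod (n - k))"
    using BT_entry[OF l] by simp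
  finally show ?thesis .
qed

lemma kernel_char: assumes x: "x \<in> carrier_vec k"
  shows "(transpose_mat (reach_mat A B) *\<^sub>v x = 0\<^sub>v (k * (n - k))) \<longleftrightarrow>
    (\<forall>j<k. transpose_mat B *\<^sub>v itA j x = 0\<^sub>v (n - k))"
proof -
  define m where "m = n - k"
  have m0: "0 < m" using kn unfolding m_def by simp
  have "(transpose_mat (reach_mat A B) *\<^sub>v x = 0\<^sub>v (k * m)) \<longleftrightarrow>
    (\<forall>jj<k*m. (transpose_mat (reach_mat A B) *\<^sub>v x) $ jj = 0)"
    using C_carrier unfolding m_def by (auto simp: vec_eq_iff)
  also have "\<dots> \<longleftrightarrow> (\<forall>jj<k*m. (transpose_mat B *\<^sub>v itA (jj div m) x) $ (jj mod m) = 0)"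
    using CT_entry[OF _ x] unfolding m_def by simp
  also have "\<dots> \<longleftrightarrow> (\<forall>j<k. \<forall>l<m. (transpose_mat B *\<^sub>v itA j x) $ l = 0)"
  proof
    assume h: "\<forall>jj<k*m. (transpose_mat B *\<^sub>v itA (jj div m) x) $ (jj mod m) = 0"
    show "\<forall>j<k. \<forall>l<m. (transpose_mat B *\<^sub>v itA j x) $ l = 0"
    proof (intro allI impI)
      fix j l assume j: "j < k" and l: "l < m"
      have lt: "j * m + l < k * m"
      proof -
        have "j * m + l < j * m + m" using l by simp
        also have "\<dots> = Suc j * m" by simp
        also have "\<dots> \<le> k * m" using j by (intro mult_right_mono) auto
        finally show ?thesis .
      qed
      have d: "(j * m + l) div m = j" using l m0 by simp
      have md: "(j * m + l) mod m = l" using l m0 by simp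
      show "(transpose_mat B *\<^sub>v itA j x) $ l = 0" using h[rule_format, OF lt] d md by simp
    qed
  next
    assume h: "\<forall>j<k. \<forall>l<m. (transpose_mat B *\<^sub>v itA j x) $ l = 0"
    show "\<forall>jj<k*m. (transpose_mat B *\<^sub>v itA (jj div m) x) $ (jj mod m) = 0"
    proof (intro allI impI)
      fix jj assume jj: "jj < k * m"
      have "jj div m < k" using jj m0 by (simp add: div_less_iff_less_mult)
      moreover have "jj mod m < m" using m0 by simp
      ultimately show "(transpose_mat B *\<^sub>v itA (jj div m) x) $ (jj mod m) = 0" using h by blast
    qed
  qed
  also have "\<dots> \<longleftrightarrow> (\<forall>j<k. transpose_mat B *\<^sub>v itA j x = 0\<^sub>v m)"
    using B_dim unfolding m_def by (auto simp: vec_eq_iff)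
  finally show ?thesis unfolding m_def .
qed

lemma cc_lincomb:
  assumes fX: "finite X" and X: "X \<subseteq> carrier_vec k"
  shows "cc (module.lincomb (module_vec TYPE('a) k) a X) = (\<Sum>b\<in>X. scale (a b) (cc b))"
proof -
  interpret NC: vec_space "TYPE('a)" k .
  have "cc (NC.lincomb a X) = (\<Sum>j<k. scale (\<Sum>b\<in>X. a b * b $ j) (v j))"
    unfolding cc_def by (intro sum.cong refl) (simp add: NC.lincomb_index[OF _ X])
  also have "\<dots> = (\<Sum>j<k. \<Sum>b\<in>X. scale (a b) (scale (b $ j) (v j)))"
    by (simp add: VS.scale_sum_left)
  also have "\<dots> = (\<Sum>b\<in>X. \<Sum>j<k. scale (a b) (scale (b $ j) (v j)))"
    by (rule sum.swap)
  also have "\<dots> = (\<Sum>b\<in>X. scale (a b) (cc b))"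
    unfolding cc_def by (simp add: VS.scale_sum_right)
  finally show ?thesis .
qed

lemma bridge: assumes M: "M \<in> carrier_mat N k"
  shows "VS.dim (cc ` mat_kernel M) = kernel_dim M"
proof -
  interpret K: kernel N k M by unfold_locales (rule M)
  obtain Bs where fB: "finite Bs" and bB: "K.basis Bs" using kernel_basis_exists[OF M] by blast
  have dimK: "kernel_dim M = card Bs" using K.Ker.dim_basis[OF fB bB] by simp
  have BK: "Bs \<subseteq> mat_kernel M" and liK: "\<not> K.Ker.lin_dep Bs" and genK: "K.span Bs = mat_kernel M"
    using bB unfolding K.Ker.basis_def by auto
  have spanB: "K.NC.span Bs = mat_kernel M" using K.span_same[OF BK] genK by simp
  have liB: "\<not> K.NC.lin_dep Bs" using K.lindep_same[OF BK] liK by simp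
  have Bc: "Bs \<subseteq> carrier_vec k" using BK mat_kernel_carrier[OF M] by auto
  have Kc: "mat_kernel M \<subseteq> carrier_vec k" using mat_kernel_carrier[OF M] by auto
  have injB: "inj_on cc Bs" using cc_inj Bc by (auto simp: inj_on_def)
  have indep: "\<not> VS.dependent (cc ` Bs)"
  proof
    assume "VS.dependent (cc ` Bs)"
    then obtain u where u1: "\<exists>w\<in>cc ` Bs. u w \<noteq> 0" and u2: "(\<Sum>w\<in>cc ` Bs. scale (u w) w) = 0"
      using VS.dependent_finite[of "cc ` Bs"] fB by auto
    then obtain b0 where b0: "b0 \<in> Bs" "u (cc b0) \<noteq> 0" by auto
    have "(\<Sum>b\<in>Bs. scale (u (cc b)) (cc b)) = 0" using u2 by (simp add: sum.reindex[OF injB])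
    then have "cc (K.NC.lincomb (\<lambda>b. u (cc b)) Bs) = 0" using cc_lincomb[OF fB Bc] by simp
    moreover have lcc: "K.NC.lincomb (\<lambda>b. u (cc b)) Bs \<in> carrier_vec k"
      using K.NC.lincomb_closed[of Bs "\<lambda>b. u (cc b)"] Bc by simp
    ultimately have "K.NC.lincomb (\<lambda>b. u (cc b)) Bs = 0\<^sub>v k"
      using cc_inj[OF lcc zero_carrier_vec] cc_zero by simp
    then have "K.NC.lin_dep Bs"
      using K.NC.lin_dep_crit[OF fB subset_refl _ b0(1), of "\<lambda>b. u (cc b)"] b0(2) by simp
    then show False using liB by simp
  qed
  have span: "cc ` mat_kernel M \<subseteq> VS.span (cc ` Bs)"
  proof
    fix w assume "w \<in> cc ` mat_kernel M"
    then obtain x where x: "x \<in> mat_kernel M" "w = cc x" by auto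
    then have "x \<in> K.NC.span Bs" using spanB by simp
    then obtain a X where aX: "x = K.NC.lincomb a X" "finite X" "X \<subseteq> Bs"
      using K.NC.in_spanE by blast
    have "w = (\<Sum>b\<in>X. scale (a b) (cc b))" using x(2) aX cc_lincomb[OF aX(2)] Bc by auto
    also have "\<dots> \<in> VS.span (cc ` Bs)" using aX(3)
      by (intro VS.span_sum VS.span_scale VS.span_base) auto
    finally show "w \<in> VS.span (cc ` Bs)" .
  qed
  have "card (cc ` Bs) = VS.dim (cc ` mat_kernel M)"
    using VS.basis_card_eq_dim[of "cc ` Bs" "cc ` mat_kernel M"] BK span indep by auto
  then show ?thesis using dimK card_image[OF injB] by simp
qed

lemma main: "vec_space.rank k (reach_mat A B) = k - VS.dim (largest_invariant_subspace scale W T)"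
proof -
  let ?C = "reach_mat A B"
  have CT: "transpose_mat ?C \<in> carrier_mat (k * (n - k)) k" using C_carrier by simp
  have Kset: "{x \<in> carrier_vec k. \<forall>j<k. transpose_mat B *\<^sub>v itA j x = 0\<^sub>v (n-k)} = mat_kernel (transpose_mat ?C)"
    unfolding mat_kernel_def using C_carrier kernel_char by auto
  have "VS.dim (largest_invariant_subspace scale W T) = kernel_dim (transpose_mat ?C)"
    unfolding largest Pk_image Kset using bridge[OF CT] .
  moreover have "kernel_dim (transpose_mat ?C) + vec_space.rank (k * (n - k)) (transpose_mat ?C) = k"
    using rank_nullity_mat[OF CT] .
  moreover have "vec_space.rank (k * (n - k)) (transpose_mat ?C) = vec_space.rank k ?C"
    using rank_transpose[OF C_carrier] .
  ultimately show ?thesis by simp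
qed

end

theorem corollary4:
  fixes scale :: "'a::{field,finite} \<Rightarrow> 'b::ab_group_add \<Rightarrow> 'b"
    and n k :: nat
    and v :: "nat \<Rightarrow> 'b"
    and A B :: "'a mat"
    and T :: "'b \<Rightarrow> 'b"
  assumes vs: "vector_space scale"
    and kpos: "0 < k" and kn: "k < n"
    and basis_inj: "inj_on v {..<n}"
    and basis_indep: "\<not> module.dependent scale (v ` {..<n})"
    and basis_span: "module.span scale (v ` {..<n}) = UNIV"
    and A_dim: "A \<in> carrier_mat k k"
    and B_dim: "B \<in> carrier_mat k (n - k)"
    and T_lin: "linear_on_subspace scale (module.span scale (v ` {..<k})) T"
    and T_mat: "\<forall>j<k. T (v j) =
                   (\<Sum>i<k. scale (A $$ (j, i)) (v i)) + (\<Sum>i<n - k. scale (B $$ (j, i)) (v (k + i)))"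
  shows "vec_space.rank k (reach_mat A B) =
           k - vector_space.dim scale
                 (largest_invariant_subspace scale (module.span scale (v ` {..<k})) T)"
  proof -
  interpret cs scale n k v A B T
    using cs.intro[OF vs cs_axioms.intro[OF kn basis_inj basis_indep basis_span A_dim B_dim T_lin T_mat]] .
  show ?thesis using main .
qed

end
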